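(* Let $V=[n]$, let $\mathbb V=\{V_1,\dots,V_k\}$ be a partition of $V$ into nonempty classes, let $d:\mathbb V\to\mathbb N$, let $D$ be a $k\times k$ matrix of nonnegative integers, and let $\Omega=\langle\mathbb V,d,D\rangle$. The Markov chain $\mathcal M$ on $\Omega$ is irreducible; in particular, for any $G_0,G_1\in\Omega$ there is a finite sequence of legal switches which, applied successively starting from $G_0$, produces $G_1$.
   Context: $\langle\mathbb V,d,D\rangle$ is the set of simple graphs $G$ on $V$ in which every vertex of $V_i$ has degree $d(V_i)$, there are exactly $d_{ij}$ edges between $V_i$ and $V_j$ for $i\neq j$, and exactly $d_{ii}$ edges with both endpoints in $V_i$. For $G\in\Omega$, a legal switch $[uv,u'v'\,|\,uv',u'v]$ is defined when $u,u'$ belong to the same class $V_i$, $uv,u'v'\in E(G)$ and $uv',u'v\notin E(G)$; it produces the graph with edge set $E(G)\cup\{uv',u'v\}\setminus\{uv,u'v'\}$, which lies in $\Omega$. Two legal switches are distinct if they produce different graphs; $\ell(G)$ is the number of distinct legal switches from $G$. The chain $\mathcal M$: from $X_t=G$, with probability $1/2$ set $X_{t+1}=G$; with probability $1/2$ choose one of the $\ell(G)$ distinct legal switches uniformly, let $G'$ be the result, and set $X_{t+1}=G'$ with probability $\ell(G)/(\ell(G)+\ell(G'))$ and $X_{t+1}=G$ otherwise. *)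

theory Defs
  imports Complex_Main
begin

definition is_partition :: "nat \<Rightarrow> nat \<Rightarrow> (nat \<Rightarrow> nat set) \<Rightarrow> bool" where
  "is_partition n k cls \<longleftrightarrow>
     (\<Union>i<k. cls i) = {1..n} \<and> (\<forall>i<k. cls i \<noteq> {}) \<and>
     (\<forall>i<k. \<forall>j<k. i \<noteq> j \<longrightarrow> cls i \<inter> cls j = {})"

definition simple_graph_on :: "nat set \<Rightarrow> nat set set \<Rightarrow> bool" where
  "simple_graph_on V E \<longleftrightarrow> E \<subseteq> {{u, v} | u v. u \<in> V \<and> v \<in> V \<and> u \<noteq> v}"

definition degree :: "nat set set \<Rightarrow> nat \<Rightarrow> nat" where
  "degree E v = card {e \<in> E. v \<in> e}"

text \<open>The set \<Omega> = <V,d,D>: d i is the degree prescribed for class i, D i j the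
  number of edges between classes i and j (D i i: edges inside class i).\<close>
definition Omega :: "nat \<Rightarrow> nat \<Rightarrow> (nat \<Rightarrow> nat set) \<Rightarrow> (nat \<Rightarrow> nat) \<Rightarrow> (nat \<Rightarrow> nat \<Rightarrow> nat)
                      \<Rightarrow> nat set set set" where
  "Omega n k cls d D = {E. simple_graph_on {1..n} E \<and>
      (\<forall>i<k. \<forall>v\<in>cls i. degree E v = d i) \<and>
      (\<forall>i<k. \<forall>j<k. i \<noteq> j \<longrightarrow>
          card {e \<in> E. \<exists>u\<in>cls i. \<exists>v\<in>cls j. e = {u, v}} = D i j) \<and>
      (\<forall>i<k. card {e \<in> E. e \<subseteq> cls i} = D i i)}"

text \<open>Legal switch [uv,u'v' | uv',u'v] on G: u,u' in the same class, uv,u'v' edges,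
  uv',u'v non-edges (four distinct vertices, so that the new pairs are genuine edges).\<close>
definition legal_switch :: "nat \<Rightarrow> (nat \<Rightarrow> nat set) \<Rightarrow> nat set set
                             \<Rightarrow> nat \<Rightarrow> nat \<Rightarrow> nat \<Rightarrow> nat \<Rightarrow> bool" where
  "legal_switch k cls E u v u' v' \<longleftrightarrow>
     (\<exists>i<k. u \<in> cls i \<and> u' \<in> cls i) \<and>
     distinct [u, v, u', v'] \<and>
     {u, v} \<in> E \<and> {u', v'} \<in> E \<and> {u, v'} \<notin> E \<and> {u', v} \<notin> E"

definition switch_result :: "nat set set \<Rightarrow> nat \<Rightarrow> nat \<Rightarrow> nat \<Rightarrow> nat \<Rightarrow> nat set set" where
  "switch_result E u v u' v' = (E \<union> {{u, v'}, {u', v}}) - {{u, v}, {u', v'}}"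

text \<open>Graphs obtainable from G by one legal switch; distinct switches = distinct results.\<close>
definition switch_nbrs :: "nat \<Rightarrow> (nat \<Rightarrow> nat set) \<Rightarrow> nat set set \<Rightarrow> nat set set set" where
  "switch_nbrs k cls E = {switch_result E u v u' v' | u v u' v'. legal_switch k cls E u v u' v'}"

definition num_switches :: "nat \<Rightarrow> (nat \<Rightarrow> nat set) \<Rightarrow> nat set set \<Rightarrow> nat" where
  "num_switches k cls E = card (switch_nbrs k cls E)"

definition switch_rel :: "nat \<Rightarrow> nat \<Rightarrow> (nat \<Rightarrow> nat set) \<Rightarrow> (nat \<Rightarrow> nat) \<Rightarrow> (nat \<Rightarrow> nat \<Rightarrow> nat)
                           \<Rightarrow> (nat set set \<times> nat set set) set" where
  "switch_rel n k cls d D = {(G, G'). G \<in> Omega n k cls d D \<and> G' \<in> switch_nbrs k cls G}"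

definition trans_prob :: "nat \<Rightarrow> nat \<Rightarrow> (nat \<Rightarrow> nat set) \<Rightarrow> (nat \<Rightarrow> nat) \<Rightarrow> (nat \<Rightarrow> nat \<Rightarrow> nat)
                           \<Rightarrow> nat set set \<Rightarrow> nat set set \<Rightarrow> real" where
  "trans_prob n k cls d D G G' =
     (let off = (\<lambda>H. if H \<noteq> G \<and> H \<in> switch_nbrs k cls G
                      then (1/2) * (1 / real (num_switches k cls G)) *
                           (real (num_switches k cls G) /
                            (real (num_switches k cls G) + real (num_switches k cls H)))
                      else 0)
      in if G' = G then 1 - (\<Sum>H\<in>Omega n k cls d D - {G}. off H) else off G')"

fun trans_prob_n :: "nat \<Rightarrow> nat \<Rightarrow> (nat \<Rightarrow> nat set) \<Rightarrow> (nat \<Rightarrow> nat) \<Rightarrow> (nat \<Rightarrow> nat \<Rightarrow> nat)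
                     \<Rightarrow> nat \<Rightarrow> nat set set \<Rightarrow> nat set set \<Rightarrow> real" where
  "trans_prob_n n k cls d D 0 G G' = (if G = G' then 1 else 0)"
| "trans_prob_n n k cls d D (Suc t) G G' =
     (\<Sum>H\<in>Omega n k cls d D. trans_prob_n n k cls d D t G H * trans_prob n k cls d D H G')"

definition irreducible_chain :: "nat \<Rightarrow> nat \<Rightarrow> (nat \<Rightarrow> nat set) \<Rightarrow> (nat \<Rightarrow> nat) \<Rightarrow> (nat \<Rightarrow> nat \<Rightarrow> nat) \<Rightarrow> bool" where
  "irreducible_chain n k cls d D \<longleftrightarrow>
     (\<forall>G0\<in>Omega n k cls d D. \<forall>G1\<in>Omega n k cls d D. \<exists>t. trans_prob_n n k cls d D t G0 G1 > 0)"

end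

theory Submission
  imports Defs
begin


definition sd :: "'a set \<Rightarrow> 'a set \<Rightarrow> 'a set" where
  "sd A B = (A - B) \<union> (B - A)"

definition nb :: "nat set set \<Rightarrow> nat \<Rightarrow> nat set" where
  "nb E x = {y. {x,y} \<in> E}"

lemma sg_edge:
  assumes "simple_graph_on V E" "{x,y} \<in> E"
  shows "x \<noteq> y \<and> x \<in> V \<and> y \<in> V"
proof -
  from assms obtain u v where "{x,y} = {u,v}" "u \<in> V" "v \<in> V" "u \<noteq> v"
    unfolding simple_graph_on_def by blast
  then show ?thesis by (auto simp: doubleton_eq_iff)
qed

lemma sg_form:
  assumes "simple_graph_on V E" "e \<in> E"
  shows "\<exists>x y. e = {x,y} \<and> x \<noteq> y \<and> x \<in> V \<and> y \<in> V"
  using assms unfolding simple_graph_on_def by blast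

lemma sg_finite:
  assumes "simple_graph_on {1..n} E" shows "finite E"
proof -
  have "E \<subseteq> Pow {1..n}" using assms unfolding simple_graph_on_def by auto
  then show ?thesis by (rule finite_subset) auto
qed

lemma nb_sub: "simple_graph_on V E \<Longrightarrow> nb E x \<subseteq> V"
  unfolding nb_def by (auto dest: sg_edge)

lemma nb_finite: "simple_graph_on {1..n} E \<Longrightarrow> finite (nb E x)"
  by (rule finite_subset[OF nb_sub]) auto

lemma degree_nb:
  assumes "simple_graph_on V E"
  shows "degree E x = card (nb E x)"
proof -
  have "bij_betw (\<lambda>y. {x,y}) (nb E x) {e\<in>E. x \<in> e}"
  proof (rule bij_betwI')
    show "\<And>y z. y \<in> nb E x \<Longrightarrow> z \<in> nb E x \<Longrightarrow> ({x, y} = {x, z}) = (y = z)"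
      by (auto simp: doubleton_eq_iff)
    show "\<And>y. y \<in> nb E x \<Longrightarrow> {x, y} \<in> {e \<in> E. x \<in> e}" by (auto simp: nb_def)
    show "\<And>e. e \<in> {e \<in> E. x \<in> e} \<Longrightarrow> \<exists>y\<in>nb E x. e = {x, y}"
    proof -
      fix e assume "e \<in> {e \<in> E. x \<in> e}"
      then have "e \<in> E" "x \<in> e" by auto
      then obtain p q where "e = {p,q}" using sg_form[OF assms] by blast
      with \<open>x \<in> e\<close> \<open>e \<in> E\<close> show "\<exists>y\<in>nb E x. e = {x, y}"
        by (auto simp: nb_def insert_commute)
    qed
  qed
  then show ?thesis unfolding degree_def by (simp add: bij_betw_same_card)
qed

lemma card_sd:
  assumes "finite S" "finite T"
  shows "card (sd S T) + 2 * card (S \<inter> T) = card S + card T"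
proof -
  have "sd S T = (S - T) \<union> (T - S)" by (simp add: sd_def)
  moreover have "(S - T) \<inter> (T - S) = {}" by auto
  ultimately have "card (sd S T) = card (S - T) + card (T - S)"
    using assms by (simp add: card_Un_disjoint)
  moreover have "card (S - T) = card S - card (S \<inter> T)"
    using assms by (metis card_Diff_subset_Int finite_Int)
  moreover have "card (T - S) = card T - card (S \<inter> T)"
    using assms by (metis card_Diff_subset_Int finite_Int inf_commute)
  moreover have "card (S \<inter> T) \<le> card S" "card (S \<inter> T) \<le> card T"
    using assms by (auto intro: card_mono)
  ultimately show ?thesis by linarith
qed

lemma card_switch:
  assumes "finite E" "R \<subseteq> E" "A \<inter> E = {}" "finite A"
    and "card (A \<inter> P) = card (R \<inter> P)"
  shows "card (((E \<union> A) - R) \<inter> P) = card (E \<inter> P)"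
proof -
  have eq: "((E \<union> A) - R) \<inter> P = ((E \<inter> P) - (R \<inter> P)) \<union> (A \<inter> P)"
    using assms(2,3) by auto
  have "card (((E \<inter> P) - (R \<inter> P)) \<union> (A \<inter> P)) = card ((E \<inter> P) - (R \<inter> P)) + card (A \<inter> P)"
    using assms by (intro card_Un_disjoint) auto
  moreover have "card ((E \<inter> P) - (R \<inter> P)) = card (E \<inter> P) - card (R \<inter> P)"
    using assms by (intro card_Diff_subset) (auto intro: finite_subset)
  moreover have "card (R \<inter> P) \<le> card (E \<inter> P)"
    using assms by (intro card_mono) auto
  moreover have "card (((E \<union> A) - R) \<inter> P) = card (((E \<inter> P) - (R \<inter> P)) \<union> (A \<inter> P))"
    by (simp only: eq)
  ultimately show ?thesis using assms(5) by linarith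
qed

lemma card_pair_int:
  assumes "a \<noteq> b"
  shows "card ({a,b} \<inter> P) = (if a \<in> P then 1 else 0) + (if b \<in> P then 1 else 0)"
  using assms by (cases "a \<in> P"; cases "b \<in> P") (auto simp: Int_insert_left)



definition samecl :: "nat \<Rightarrow> (nat \<Rightarrow> nat set) \<Rightarrow> nat \<Rightarrow> nat \<Rightarrow> bool" where
  "samecl k cls x y \<longleftrightarrow> (\<exists>i<k. x \<in> cls i \<and> y \<in> cls i)"

lemma card_AR_deg:
  assumes "distinct [u,v,u',v']"
  shows "card ({{u,v'},{u',v}} \<inter> {e. x \<in> e}) = card ({{u,v},{u',v'}} \<inter> {e. x \<in> e})"
proof -
  have d1: "{u,v'} \<noteq> {u',v}" "{u,v} \<noteq> {u',v'}" using assms by (auto simp: doubleton_eq_iff)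
  show ?thesis using assms
    by (simp only: card_pair_int[OF d1(1)] card_pair_int[OF d1(2)]) auto
qed

lemma card_AR_inv:
  assumes "distinct [u,v,u',v']"
    and "({u,v'} \<in> P \<longleftrightarrow> {u',v'} \<in> P)" "({u',v} \<in> P \<longleftrightarrow> {u,v} \<in> P)"
  shows "card ({{u,v'},{u',v}} \<inter> P) = card ({{u,v},{u',v'}} \<inter> P)"
proof -
  have d1: "{u,v'} \<noteq> {u',v}" "{u,v} \<noteq> {u',v'}" using assms by (auto simp: doubleton_eq_iff)
  show ?thesis using assms
    by (simp add: card_pair_int[OF d1(1)] card_pair_int[OF d1(2)])
qed

lemma coll_int: "{e \<in> E. P e} = E \<inter> {e. P e}" by auto

lemma pairP_iff:
  "({x,y} \<in> {e. \<exists>a\<in>A. \<exists>b\<in>B. e = {a,b}}) \<longleftrightarrow> (x \<in> A \<and> y \<in> B) \<or> (y \<in> A \<and> x \<in> B)"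
  by (auto simp: doubleton_eq_iff insert_commute)

context
  fixes n k :: nat and cls :: "nat \<Rightarrow> nat set" and d :: "nat \<Rightarrow> nat" and D :: "nat \<Rightarrow> nat \<Rightarrow> nat"
  assumes part: "is_partition n k cls"
begin

lemma cover: "x \<in> {1..n} \<Longrightarrow> \<exists>i<k. x \<in> cls i"
  using part unfolding is_partition_def by blast

lemma disj: "i < k \<Longrightarrow> j < k \<Longrightarrow> x \<in> cls i \<Longrightarrow> x \<in> cls j \<Longrightarrow> i = j"
  using part unfolding is_partition_def by blast

lemma samecl_iff: "samecl k cls x y \<Longrightarrow> i < k \<Longrightarrow> (x \<in> cls i \<longleftrightarrow> y \<in> cls i)"
  unfolding samecl_def using disj by blast

lemma Om_sg: "G \<in> Omega n k cls d D \<Longrightarrow> simple_graph_on {1..n} G"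
  unfolding Omega_def by auto

lemma Om_fin: "G \<in> Omega n k cls d D \<Longrightarrow> finite G"
  using Om_sg sg_finite by blast

lemma Om_finite: "finite (Omega n k cls d D)"
proof -
  have "Omega n k cls d D \<subseteq> Pow (Pow {1..n})"
    unfolding Omega_def simple_graph_on_def by auto
  then show ?thesis by (rule finite_subset) auto
qed

lemma Om_deg: "G \<in> Omega n k cls d D \<Longrightarrow> samecl k cls p q \<Longrightarrow> card (nb G p) = card (nb G q)"
proof -
  assume G: "G \<in> Omega n k cls d D" and s: "samecl k cls p q"
  then obtain i where "i < k" "p \<in> cls i" "q \<in> cls i" unfolding samecl_def by blast
  then have "degree G p = d i" "degree G q = d i" using G unfolding Omega_def by auto
  then show ?thesis using degree_nb[OF Om_sg[OF G]] by simp
qed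

lemma nb_minus:
  assumes G: "G \<in> Omega n k cls d D" and s: "samecl k cls p q"
  shows "card (nb G p - {q}) = card (nb G q - {p})"
proof -
  have e: "q \<in> nb G p \<longleftrightarrow> p \<in> nb G q" by (simp add: nb_def insert_commute)
  have f: "finite (nb G p)" "finite (nb G q)" using nb_finite Om_sg G by blast+
  show ?thesis
  proof (cases "q \<in> nb G p")
    case True
    then show ?thesis using e f Om_deg[OF G s] by (simp add: card_Diff_singleton)
  next
    case False
    then show ?thesis using e Om_deg[OF G s] by simp
  qed
qed

lemma legal_facts:
  assumes G: "G \<in> Omega n k cls d D" and L: "legal_switch k cls G u v u' v'"
  shows "samecl k cls u u'" "distinct [u,v,u',v']" "{u,v} \<in> G" "{u',v'} \<in> G"
    "{u,v'} \<notin> G" "{u',v} \<notin> G" "u \<in> {1..n}" "v \<in> {1..n}" "u' \<in> {1..n}" "v' \<in> {1..n}"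
  using L sg_edge[OF Om_sg[OF G]] unfolding legal_switch_def samecl_def by blast+

lemma sw_Omega:
  assumes G: "G \<in> Omega n k cls d D" and L: "legal_switch k cls G u v u' v'"
  shows "switch_result G u v u' v' \<in> Omega n k cls d D"
proof -
  note F = legal_facts[OF G L]
  define A where "A = {{u,v'},{u',v}}"
  define R where "R = {{u,v},{u',v'}}"
  have sr: "switch_result G u v u' v' = (G \<union> A) - R" by (simp add: switch_result_def A_def R_def)
  have fin: "finite G" using Om_fin[OF G] .
  have RG: "R \<subseteq> G" using F by (auto simp: R_def)
  have AG: "A \<inter> G = {}" using F by (auto simp: A_def)
  have fA: "finite A" by (simp add: A_def)
  have sg: "simple_graph_on {1..n} ((G \<union> A) - R)"
  proof -
    have "G \<subseteq> {{x, y} |x y. x \<in> {1..n} \<and> y \<in> {1..n} \<and> x \<noteq> y}"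
      using Om_sg[OF G] by (simp add: simple_graph_on_def)
    moreover have "A \<subseteq> {{x, y} |x y. x \<in> {1..n} \<and> y \<in> {1..n} \<and> x \<noteq> y}"
      using F unfolding A_def by auto
    ultimately show ?thesis unfolding simple_graph_on_def by blast
  qed
  have deg: "degree ((G \<union> A) - R) x = degree G x" for x
  proof -
    have "degree ((G \<union> A) - R) x = card (((G \<union> A) - R) \<inter> {e. x \<in> e})"
      unfolding degree_def by (simp only: coll_int)
    also have "\<dots> = card (G \<inter> {e. x \<in> e})"
      using card_switch[OF fin RG AG fA] card_AR_deg[OF F(2)] by (simp add: A_def R_def)
    also have "\<dots> = degree G x" unfolding degree_def by (simp only: coll_int)
    finally show ?thesis .
  qed
  have cnt: "card {e \<in> (G \<union> A) - R. \<exists>a\<in>cls i. \<exists>b\<in>cls j. e = {a, b}}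
           = card {e \<in> G. \<exists>a\<in>cls i. \<exists>b\<in>cls j. e = {a, b}}" if "i < k" "j < k" for i j
  proof -
    let ?P = "{e. \<exists>a\<in>cls i. \<exists>b\<in>cls j. e = {a, b}}"
    have inv: "{u, v'} \<in> ?P \<longleftrightarrow> {u', v'} \<in> ?P" "{u', v} \<in> ?P \<longleftrightarrow> {u, v} \<in> ?P"
      unfolding pairP_iff using samecl_iff[OF F(1)] that by auto
    have "card {e \<in> (G \<union> A) - R. \<exists>a\<in>cls i. \<exists>b\<in>cls j. e = {a, b}} = card (((G \<union> A) - R) \<inter> ?P)"
      by (simp only: coll_int)
    also have "\<dots> = card (G \<inter> ?P)"
      using card_switch[OF fin RG AG fA] card_AR_inv[OF F(2) inv] by (simp add: A_def R_def)
    also have "\<dots> = card {e \<in> G. \<exists>a\<in>cls i. \<exists>b\<in>cls j. e = {a, b}}"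
      by (simp only: coll_int)
    finally show ?thesis .
  qed
  have cnt2: "card {e \<in> (G \<union> A) - R. e \<subseteq> cls i} = card {e \<in> G. e \<subseteq> cls i}" if "i < k" for i
  proof -
    let ?P = "{e. e \<subseteq> cls i}"
    have inv: "{u, v'} \<in> ?P \<longleftrightarrow> {u', v'} \<in> ?P" "{u', v} \<in> ?P \<longleftrightarrow> {u, v} \<in> ?P"
      using samecl_iff[OF F(1)] that by auto
    have "card {e \<in> (G \<union> A) - R. e \<subseteq> cls i} = card (((G \<union> A) - R) \<inter> ?P)"
      by (simp only: coll_int)
    also have "\<dots> = card (G \<inter> ?P)"
      using card_switch[OF fin RG AG fA] card_AR_inv[OF F(2) inv] by (simp add: A_def R_def)
    also have "\<dots> = card {e \<in> G. e \<subseteq> cls i}"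
      by (simp only: coll_int)
    finally show ?thesis .
  qed
  show ?thesis unfolding sr using G sg deg cnt cnt2 unfolding Omega_def by auto
qed

end


context
  fixes n k :: nat and cls :: "nat \<Rightarrow> nat set" and d :: "nat \<Rightarrow> nat" and D :: "nat \<Rightarrow> nat \<Rightarrow> nat"
  assumes part: "is_partition n k cls"
begin

abbreviation "Om \<equiv> Omega n k cls d D"
abbreviation "rel \<equiv> switch_rel n k cls d D"

lemma sw_rel: "G \<in> Om \<Longrightarrow> legal_switch k cls G u v u' v' \<Longrightarrow> (G, switch_result G u v u' v') \<in> rel"
  unfolding switch_rel_def switch_nbrs_def by blast

lemma rel_Om: "(G,H) \<in> rel \<Longrightarrow> G \<in> Om \<and> H \<in> Om"
  unfolding switch_rel_def switch_nbrs_def using sw_Omega[OF part] by blast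

lemma T_card:
  assumes "distinct [u,v,u',v']"
  shows "card {{u,v},{u',v'},{u,v'},{u',v}} = (4::nat)"
  using assms by (auto simp: card_insert_if doubleton_eq_iff)

lemma sw_mem:
  assumes G: "G \<in> Om" and L: "legal_switch k cls G u v u' v'"
  shows "e \<in> switch_result G u v u' v' \<longleftrightarrow>
     (if e \<in> {{u,v},{u',v'},{u,v'},{u',v}} then e \<notin> G else e \<in> G)"
proof -
  note F = legal_facts[OF part G L]
  have d1: "{u,v'} \<noteq> {u,v}" "{u,v'} \<noteq> {u',v'}" "{u',v} \<noteq> {u,v}" "{u',v} \<noteq> {u',v'}"
    using F(2) by (auto simp: doubleton_eq_iff)
  show ?thesis using F d1 unfolding switch_result_def by auto
qed

lemma sw_sd:
  assumes G: "G \<in> Om" and L: "legal_switch k cls G u v u' v'" and H: "finite H"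
  shows "card (sd (switch_result G u v u' v') H) + 2 * card (sd G H \<inter> {{u,v},{u',v'},{u,v'},{u',v}})
         = card (sd G H) + 4"
proof -
  let ?T = "{{u,v},{u',v'},{u,v'},{u',v}}"
  let ?G' = "switch_result G u v u' v'"
  have "sd ?G' H = sd (sd G H) ?T"
  proof (rule set_eqI)
    fix e show "e \<in> sd ?G' H \<longleftrightarrow> e \<in> sd (sd G H) ?T"
      using sw_mem[OF G L, of e] unfolding sd_def by (cases "e \<in> ?T") auto
  qed
  moreover have "finite (sd G H)" using Om_fin[OF part G] H unfolding sd_def by auto
  ultimately show ?thesis
    using card_sd[of "sd G H" ?T] T_card[OF legal_facts(2)[OF part G L]] by simp
qed

lemma sd_comm: "sd A B = sd B A" unfolding sd_def by auto

lemma sw_rev: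
  assumes G: "G \<in> Om" and L: "legal_switch k cls G u v u' v'"
  shows "legal_switch k cls (switch_result G u v u' v') u v' u' v"
    "switch_result (switch_result G u v u' v') u v' u' v = G"
proof -
  note F = legal_facts[OF part G L]
  have d1: "{u,v'} \<noteq> {u,v}" "{u,v'} \<noteq> {u',v'}" "{u',v} \<noteq> {u,v}" "{u',v} \<noteq> {u',v'}"
    using F(2) by (auto simp: doubleton_eq_iff)
  show "legal_switch k cls (switch_result G u v u' v') u v' u' v"
    using F d1 L unfolding legal_switch_def switch_result_def by auto
  show "switch_result (switch_result G u v u' v') u v' u' v = G"
    using F d1 unfolding switch_result_def by auto
qed

lemma rel_sym: "(G,H) \<in> rel \<Longrightarrow> (H,G) \<in> rel"
proof -
  assume "(G,H) \<in> rel"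
  then obtain u v u' v' where G: "G \<in> Om" and L: "legal_switch k cls G u v u' v'"
    and H: "H = switch_result G u v u' v'"
    unfolding switch_rel_def switch_nbrs_def by blast
  have "H \<in> Om" using sw_Omega[OF part G L] H by simp
  then show "(H,G) \<in> rel" using sw_rel[of H u v' u' v] sw_rev[OF G L] H by simp
qed

lemma rtr_Om: "(G,H) \<in> rel\<^sup>* \<Longrightarrow> G \<in> Om \<Longrightarrow> H \<in> Om"
  by (induction rule: rtrancl_induct) (auto dest: rel_Om)

lemma rtr_sym: "(G,H) \<in> rel\<^sup>* \<Longrightarrow> (H,G) \<in> rel\<^sup>*"
proof (induction rule: rtrancl_induct)
  case base then show ?case by simp
next
  case (step y z)
  then show ?case using rel_sym by (meson converse_rtrancl_into_rtrancl)
qed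

end


lemma card_diff_sym:
  assumes "finite A" "finite B" "card A = card B"
  shows "card (A - B) = card (B - A)"
proof -
  have "card (A - B) = card A - card (A \<inter> B)" using assms by (simp add: card_Diff_subset_Int)
  moreover have "card (B - A) = card B - card (B \<inter> A)" using assms by (simp add: card_Diff_subset_Int)
  ultimately show ?thesis using assms by (simp add: Int_commute)
qed

context
  fixes n k :: nat and cls :: "nat \<Rightarrow> nat set" and d :: "nat \<Rightarrow> nat" and D :: "nat \<Rightarrow> nat \<Rightarrow> nat"
  assumes part: "is_partition n k cls"
begin

abbreviation "Om' \<equiv> Omega n k cls d D"
abbreviation "rel' \<equiv> switch_rel n k cls d D"

definition good :: "nat set set \<Rightarrow> nat set set \<Rightarrow> nat set set \<Rightarrow> nat set set \<Rightarrow> nat \<Rightarrow> nat \<Rightarrow> bool" where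
  "good G H G' H' p q \<longleftrightarrow> (G,G') \<in> rel'\<^sup>* \<and> (H,H') \<in> rel'\<^sup>* \<and> card (sd G' H') + 2 \<le> card (sd G H) \<and>
      (\<forall>e. p \<notin> e \<longrightarrow> q \<notin> e \<longrightarrow> (e \<in> G' \<longleftrightarrow> e \<in> G) \<and> (e \<in> H' \<longleftrightarrow> e \<in> H))"

lemma C1:
  assumes G: "G \<in> Om'" and H: "H \<in> Om'" and s: "samecl k cls p q"
    and e1: "{v,p} \<in> G" "{v,p} \<notin> H" and e2: "{v,q} \<in> H" "{v,q} \<notin> G"
  shows "\<exists>G' H'. good G H G' H' p q"
proof (rule ccontr)
  assume N: "\<not> (\<exists>G' H'. good G H G' H' p q)"
  have sgG: "simple_graph_on {1..n} G" and sgH: "simple_graph_on {1..n} H" using Om_sg[OF part] G H by auto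
  have fG: "finite G" and fH: "finite H" using Om_fin[OF part] G H by auto
  have vp: "v \<noteq> p" using sg_edge[OF sgG e1(1)] by simp
  have vq: "v \<noteq> q" using sg_edge[OF sgH e2(1)] by simp
  have pq: "p \<noteq> q" using e1(1) e2(2) by auto
  have sc: "\<exists>i<k. p \<in> cls i \<and> q \<in> cls i" "\<exists>i<k. q \<in> cls i \<and> p \<in> cls i"
    using s unfolding samecl_def by auto
  have Gx: "{q,x} \<in> H \<and> {p,x} \<notin> H" if x1: "{q,x} \<in> G" "x \<noteq> p" "{p,x} \<notin> G" for x
  proof (rule ccontr)
    assume C: "\<not> ({q,x} \<in> H \<and> {p,x} \<notin> H)"
    have xq: "x \<noteq> q" using sg_edge[OF sgG x1(1)] by simp
    have xv: "x \<noteq> v" using x1(1) e2(2) by (auto simp: insert_commute)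
    have L: "legal_switch k cls G p v q x"
      unfolding legal_switch_def using sc vp vq pq xq xv x1 e1 e2 by (auto simp: insert_commute)
    let ?G1 = "switch_result G p v q x"
    let ?T = "{{p,v},{q,x},{p,x},{q,v}}"
    have eq: "card (sd ?G1 H) + 2 * card (sd G H \<inter> ?T) = card (sd G H) + 4"
      using sw_sd[OF part G L fH] .
    have three: "3 \<le> card (sd G H \<inter> ?T)"
    proof -
      have d: "{p,x} \<noteq> {p,v}" "{p,x} \<noteq> {q,v}" "{q,x} \<noteq> {p,v}" "{q,x} \<noteq> {q,v}" "{p,v} \<noteq> {q,v}"
        using pq xq xv vp vq x1 by (auto simp: doubleton_eq_iff)
      have pv: "{p,v} \<in> sd G H \<inter> ?T" using e1 by (simp add: sd_def insert_commute)
      have qv: "{q,v} \<in> sd G H \<inter> ?T" using e2 by (simp add: sd_def insert_commute)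
      obtain z where z: "z \<in> sd G H \<inter> ?T" "z \<noteq> {p,v}" "z \<noteq> {q,v}"
      proof (cases "{q,x} \<in> H")
        case True
        then have "{p,x} \<in> H" using C by blast
        then have "{p,x} \<in> sd G H \<inter> ?T" using x1 by (simp add: sd_def)
        then show ?thesis using that[OF _ d(1) d(2)] by blast
      next
        case False
        then have "{q,x} \<in> sd G H \<inter> ?T" using x1 by (simp add: sd_def)
        then show ?thesis using that[OF _ d(3) d(4)] by blast
      qed
      have "{{p,v},{q,v},z} \<subseteq> sd G H \<inter> ?T" by (simp only: insert_subset) (intro conjI pv qv z(1) empty_subsetI)
      moreover have "card {{p,v},{q,v},z} = 3" using d z by auto
      ultimately show ?thesis by (metis card_mono finite_Int finite.emptyI finite.insertI)
    qed
    have "good G H ?G1 H p q"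
      unfolding good_def
    proof (intro conjI allI impI)
      show "(G, ?G1) \<in> rel'\<^sup>*" using sw_rel[OF part G L] by simp
      show "(H, H) \<in> rel'\<^sup>*" by simp
      show "card (sd ?G1 H) + 2 \<le> card (sd G H)" using eq three by linarith
      fix e assume "p \<notin> e" "q \<notin> e"
      then show "(e \<in> ?G1) = (e \<in> G)" "(e \<in> H) = (e \<in> H)" using sw_mem[OF part G L, of e] by auto
    qed
    then show False using N by blast
  qed
  have Hy: "{p,y} \<in> G \<and> {q,y} \<notin> G" if y1: "{p,y} \<in> H" "y \<noteq> q" "{q,y} \<notin> H" for y
  proof (rule ccontr)
    assume C: "\<not> ({p,y} \<in> G \<and> {q,y} \<notin> G)"
    have yp: "y \<noteq> p" using sg_edge[OF sgH y1(1)] by simp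
    have yv: "y \<noteq> v" using y1(1) e1(2) by (auto simp: insert_commute)
    have L: "legal_switch k cls H q v p y"
      unfolding legal_switch_def using sc vp pq yp yv vq y1 e1 e2 by (auto simp: insert_commute)
    let ?H1 = "switch_result H q v p y"
    let ?T = "{{q,v},{p,y},{q,y},{p,v}}"
    have eq: "card (sd ?H1 G) + 2 * card (sd H G \<inter> ?T) = card (sd H G) + 4"
      using sw_sd[OF part H L fG] .
    have three: "3 \<le> card (sd H G \<inter> ?T)"
    proof -
      have d: "{q,y} \<noteq> {q,v}" "{q,y} \<noteq> {p,v}" "{p,y} \<noteq> {q,v}" "{p,y} \<noteq> {p,v}" "{p,v} \<noteq> {q,v}"
        using pq yp yv vp vq y1 by (auto simp: doubleton_eq_iff)
      have pv: "{p,v} \<in> sd H G \<inter> ?T" using e1 by (simp add: sd_def insert_commute)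
      have qv: "{q,v} \<in> sd H G \<inter> ?T" using e2 by (simp add: sd_def insert_commute)
      obtain z where z: "z \<in> sd H G \<inter> ?T" "z \<noteq> {p,v}" "z \<noteq> {q,v}"
      proof (cases "{p,y} \<in> G")
        case True
        then have "{q,y} \<in> G" using C by blast
        then have "{q,y} \<in> sd H G \<inter> ?T" using y1 by (simp add: sd_def)
        then show ?thesis using that[OF _ d(2) d(1)] by blast
      next
        case False
        then have "{p,y} \<in> sd H G \<inter> ?T" using y1 by (simp add: sd_def)
        then show ?thesis using that[OF _ d(4) d(3)] by blast
      qed
      have "{{p,v},{q,v},z} \<subseteq> sd H G \<inter> ?T" by (simp only: insert_subset) (intro conjI pv qv z(1) empty_subsetI)
      moreover have "card {{p,v},{q,v},z} = 3" using d z by auto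
      ultimately show ?thesis by (metis card_mono finite_Int finite.emptyI finite.insertI)
    qed
    have "good G H G ?H1 p q"
      unfolding good_def
    proof (intro conjI allI impI)
      show "(H, ?H1) \<in> rel'\<^sup>*" using sw_rel[OF part H L] by simp
      show "(G, G) \<in> rel'\<^sup>*" by simp
      have c1: "sd G ?H1 = sd ?H1 G" "sd H G = sd G H" unfolding sd_def by auto
      show "card (sd G ?H1) + 2 \<le> card (sd G H)" using eq three unfolding c1 by linarith
      fix e assume "p \<notin> e" "q \<notin> e"
      then show "(e \<in> ?H1) = (e \<in> H)" "(e \<in> G) = (e \<in> G)" using sw_mem[OF part H L, of e] by auto
    qed
    then show False using N by blast
  qed
  define GP where "GP = nb G p - {q}"
  define GQ where "GQ = nb G q - {p}"
  define HP where "HP = nb H p - {q}"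
  define HQ where "HQ = nb H q - {p}"
  have fin: "finite GP" "finite GQ" "finite HP" "finite HQ"
    unfolding GP_def GQ_def HP_def HQ_def using nb_finite sgG sgH by blast+
  have c1: "card GP = card GQ" unfolding GP_def GQ_def using nb_minus[OF part G s] .
  have c2: "card HP = card HQ" unfolding HP_def HQ_def using nb_minus[OF part H s] .
  have vG: "v \<in> GP - GQ" unfolding GP_def GQ_def nb_def using e1 e2 vq by (auto simp: insert_commute)
  have vH: "v \<in> HQ - HP" unfolding HP_def HQ_def nb_def using e1 e2 vp by (auto simp: insert_commute)
  have s1: "GQ - GP \<subseteq> (HQ - HP) - {v}"
  proof
    fix x assume x: "x \<in> GQ - GP"
    then have "{q,x} \<in> G" "x \<noteq> p" unfolding GQ_def nb_def by auto
    moreover have "x \<noteq> q" using sg_edge[OF sgG \<open>{q,x} \<in> G\<close>] by simp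
    moreover have "{p,x} \<notin> G" using x \<open>x \<noteq> q\<close> unfolding GP_def nb_def by auto
    ultimately have "{q,x} \<in> H \<and> {p,x} \<notin> H" using Gx by blast
    then show "x \<in> (HQ - HP) - {v}" using x vG \<open>x \<noteq> p\<close> unfolding HQ_def HP_def nb_def by auto
  qed
  have s2: "HP - HQ \<subseteq> (GP - GQ) - {v}"
  proof
    fix y assume y: "y \<in> HP - HQ"
    then have "{p,y} \<in> H" "y \<noteq> q" unfolding HP_def nb_def by auto
    moreover have "y \<noteq> p" using sg_edge[OF sgH \<open>{p,y} \<in> H\<close>] by simp
    moreover have "{q,y} \<notin> H" using y \<open>y \<noteq> p\<close> unfolding HQ_def nb_def by auto
    ultimately have "{p,y} \<in> G \<and> {q,y} \<notin> G" using Hy by blast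
    then show "y \<in> (GP - GQ) - {v}" using y vH \<open>y \<noteq> q\<close> unfolding GQ_def GP_def nb_def by auto
  qed
  have "card (GQ - GP) \<le> card ((HQ - HP) - {v})" using s1 fin by (intro card_mono) auto
  moreover have "card ((HQ - HP) - {v}) = card (HQ - HP) - 1" using vH fin by (simp add: card_Diff_singleton)
  moreover have "card (HP - HQ) \<le> card ((GP - GQ) - {v})" using s2 fin by (intro card_mono) auto
  moreover have "card ((GP - GQ) - {v}) = card (GP - GQ) - 1" using vG fin by (simp add: card_Diff_singleton)
  moreover have "card (GP - GQ) = card (GQ - GP)" using card_diff_sym[OF fin(1,2) c1] .
  moreover have "card (HP - HQ) = card (HQ - HP)" using card_diff_sym[OF fin(3,4) c2] .
  moreover have "card (HQ - HP) > 0" using vH fin by (auto simp: card_gt_0_iff)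
  moreover have "card (GP - GQ) > 0" using vG fin by (auto simp: card_gt_0_iff)
  ultimately show False by linarith
qed

end


lemma two_le: "x \<in> A \<Longrightarrow> y \<in> A \<Longrightarrow> x \<noteq> y \<Longrightarrow> finite A \<Longrightarrow> 2 \<le> card A"
proof -
  assume a: "x \<in> A" "y \<in> A" "x \<noteq> y" "finite A"
  then have "{x,y} \<subseteq> A" by auto
  then have "card {x,y} \<le> card A" using a(4) by (rule card_mono[rotated])
  then show ?thesis using a(3) by simp
qed

lemma one_le: "x \<in> A \<Longrightarrow> finite A \<Longrightarrow> 1 \<le> card A"
  by (auto simp: Suc_le_eq card_gt_0_iff)

context
  fixes n k :: nat and cls :: "nat \<Rightarrow> nat set" and d :: "nat \<Rightarrow> nat" and D :: "nat \<Rightarrow> nat \<Rightarrow> nat"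
  assumes part: "is_partition n k cls"
begin

abbreviation "Om2 \<equiv> Omega n k cls d D"
abbreviation "rel2 \<equiv> switch_rel n k cls d D"

definition "goal G H \<longleftrightarrow> (\<exists>G' H'. (G,G') \<in> rel2\<^sup>* \<and> (H,H') \<in> rel2\<^sup>* \<and> card (sd G' H') < card (sd G H))"

lemma C1g:
  assumes "G \<in> Om2" "H \<in> Om2" "samecl k cls p q"
    "{v,p} \<in> G" "{v,p} \<notin> H" "{v,q} \<in> H" "{v,q} \<notin> G"
  shows "goal G H"
  using C1[OF part assms] unfolding good_def[OF part] goal_def by fastforce

lemma cont1:
  assumes "G1 \<in> Om2" "H1 \<in> Om2" "(G,G1) \<in> rel2\<^sup>*" "(H,H1) \<in> rel2\<^sup>*"
    "samecl k cls p q" "{v,p} \<in> G1" "{v,p} \<notin> H1" "{v,q} \<in> H1" "{v,q} \<notin> G1"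
    "card (sd G1 H1) \<le> card (sd G H)"
  shows "goal G H"
proof -
  obtain G2 H2 where g: "good n k cls d D G1 H1 G2 H2 p q" using C1[OF part assms(1,2,5-9)] by blast
  then have "(G1,G2) \<in> rel2\<^sup>*" "(H1,H2) \<in> rel2\<^sup>*" "card (sd G2 H2) + 2 \<le> card (sd G1 H1)"
    unfolding good_def[OF part] by auto
  then have "(G,G2) \<in> rel2\<^sup>*" "(H,H2) \<in> rel2\<^sup>*" "card (sd G2 H2) < card (sd G H)"
    using assms(3,4,10) by (auto intro: rtrancl_trans)
  then show ?thesis unfolding goal_def by blast
qed

lemma cont2:
  assumes "G1 \<in> Om2" "H1 \<in> Om2" "(G,G1) \<in> rel2\<^sup>*" "(H,H1) \<in> rel2\<^sup>*"
    "samecl k cls p q" "{v,p} \<in> G1" "{v,p} \<notin> H1" "{v,q} \<in> H1" "{v,q} \<notin> G1"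
    "samecl k cls p' q'" "{v',p'} \<in> G1" "{v',p'} \<notin> H1" "{v',q'} \<in> H1" "{v',q'} \<notin> G1"
    "p \<notin> {v',p'}" "q \<notin> {v',p'}" "p \<notin> {v',q'}" "q \<notin> {v',q'}"
    "card (sd G1 H1) \<le> card (sd G H) + 2"
  shows "goal G H"
proof -
  obtain G2 H2 where g: "good n k cls d D G1 H1 G2 H2 p q" using C1[OF part assms(1,2,5-9)] by blast
  then have r: "(G,G2) \<in> rel2\<^sup>*" "(H,H2) \<in> rel2\<^sup>*" "card (sd G2 H2) \<le> card (sd G H)"
    and pres: "\<And>e. p \<notin> e \<Longrightarrow> q \<notin> e \<Longrightarrow> (e \<in> G2 \<longleftrightarrow> e \<in> G1) \<and> (e \<in> H2 \<longleftrightarrow> e \<in> H1)"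
    unfolding good_def[OF part] using assms(3,4,19) by (auto intro: rtrancl_trans)
  have om: "G2 \<in> Om2" "H2 \<in> Om2" using g assms(1,2) rtr_Om[OF part] unfolding good_def[OF part] by blast+
  have i2: "{v',p'} \<in> G2" "{v',p'} \<notin> H2" "{v',q'} \<in> H2" "{v',q'} \<notin> G2"
    using pres[of "{v',p'}"] pres[of "{v',q'}"] assms(11-18) by auto
  show ?thesis using cont1[OF om r(1,2) assms(10) i2 r(3)] .
qed

lemma excl:
  assumes G: "G \<in> Om2" and s: "samecl k cls x y" and z: "z \<in> nb G x" "z \<notin> nb G y" "z \<noteq> y"
  shows "\<exists>w. w \<in> nb G y \<and> w \<notin> nb G x \<and> w \<noteq> x"
proof (rule ccontr)
  assume N: "\<not> ?thesis"
  have sg: "simple_graph_on {1..n} G" using Om_sg[OF part G] .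
  have f: "finite (nb G x - {y})" "finite (nb G y - {x})" using nb_finite[OF sg] by auto
  have "y \<notin> nb G y" using sg_edge[OF sg, of y y] unfolding nb_def by auto
  then have sub: "nb G y - {x} \<subseteq> nb G x - {y}" using N by auto
  have "card (nb G y - {x}) = card (nb G x - {y})" using nb_minus[OF part G s] by simp
  then have "nb G y - {x} = nb G x - {y}" using card_subset_eq[OF f(1) sub] by simp
  then show False using z by auto
qed

lemma cp_exists:
  assumes G: "G \<in> Om2" and H: "H \<in> Om2" and ab: "{a,b} \<in> G" "{a,b} \<notin> H"
    and cl: "i < k" "l < k" "a \<in> cls i" "b \<in> cls l"
  shows "\<exists>c d. {c,d} \<in> H \<and> {c,d} \<notin> G \<and> c \<in> cls i \<and> d \<in> cls l"
proof (rule ccontr)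
  assume N: "\<not> ?thesis"
  have sgH: "simple_graph_on {1..n} H" using Om_sg[OF part H] .
  have fG: "finite G" "finite H" using Om_fin[OF part] G H by auto
  show False
  proof (cases "i = l")
    case True
    let ?SG = "{e \<in> G. e \<subseteq> cls i}" and ?SH = "{e \<in> H. e \<subseteq> cls i}"
    have c: "card ?SG = card ?SH" using G H cl unfolding Omega_def by auto
    have sub: "?SH \<subseteq> ?SG"
    proof
      fix e assume e: "e \<in> ?SH"
      then obtain x y where "e = {x,y}" using sg_form[OF sgH] by blast
      then show "e \<in> ?SG" using N e True by auto
    qed
    have "?SH = ?SG" using card_subset_eq[OF _ sub] c fG by simp
    moreover have "{a,b} \<in> ?SG" using ab cl True by auto
    ultimately show False using ab by auto
  next
    case False
    let ?SG = "{e \<in> G. \<exists>u\<in>cls i. \<exists>v\<in>cls l. e = {u,v}}" and ?SH = "{e \<in> H. \<exists>u\<in>cls i. \<exists>v\<in>cls l. e = {u,v}}"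
    have c: "card ?SG = card ?SH" using G H cl False unfolding Omega_def by auto
    have sub: "?SH \<subseteq> ?SG" using N by auto
    have "?SH = ?SG" using card_subset_eq[OF _ sub] c fG by simp
    moreover have "{a,b} \<in> ?SG" using ab cl by auto
    ultimately show False using ab by auto
  qed
qed

end


context
  fixes n k :: nat and cls :: "nat \<Rightarrow> nat set" and d :: "nat \<Rightarrow> nat" and D :: "nat \<Rightarrow> nat \<Rightarrow> nat"
  assumes part: "is_partition n k cls"
begin

abbreviation "Om3 \<equiv> Omega n k cls d D"
abbreviation "rel3 \<equiv> switch_rel n k cls d D"

lemma mainL:
  assumes G: "G \<in> Om3" and H: "H \<in> Om3" and ab: "{a,b} \<in> G" "{a,b} \<notin> H"
  shows "goal n k cls d D G H"
proof -
  have sgG: "simple_graph_on {1..n} G" and sgH: "simple_graph_on {1..n} H" using Om_sg[OF part] G H by auto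
  have fG: "finite G" and fH: "finite H" using Om_fin[OF part] G H by auto
  have abn: "a \<noteq> b" "a \<in> {1..n}" "b \<in> {1..n}" using sg_edge[OF sgG ab(1)] by auto
  obtain i where i: "i < k" "a \<in> cls i" using cover[OF part abn(2)] by blast
  obtain l where l: "l < k" "b \<in> cls l" using cover[OF part abn(3)] by blast
  obtain c d where cd: "{c,d} \<in> H" "{c,d} \<notin> G" "c \<in> cls i" "d \<in> cls l"
    using cp_exists[OF part G H ab i(1) l(1) i(2) l(2)] by blast
  have cdn: "c \<noteq> d" using sg_edge[OF sgH cd(1)] by simp
  have sac: "samecl k cls a c" "samecl k cls c a" using i cd unfolding samecl_def by auto
  have sbd: "samecl k cls b d" using l cd unfolding samecl_def by auto
  note C1g = C1g[OF part G H]
  show ?thesis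
  proof (cases "c = a")
    case True
    then show ?thesis using C1g[OF sbd, of a] ab cd by simp
  next
    case ca: False
    show ?thesis
    proof (cases "d = a")
      case True
      then have "i = l" using disj[OF part i(1) l(1)] i l cd by simp
      then have "samecl k cls b c" using l cd unfolding samecl_def by auto
      then show ?thesis using C1g[of b c a] ab cd True by (simp add: insert_commute)
    next
      case da: False
      show ?thesis
      proof (cases "c = b")
        case True
        then have "i = l" using disj[OF part i(1) l(1)] i l cd by simp
        then have "samecl k cls a d" using i cd unfolding samecl_def by auto
        then show ?thesis using C1g[of a d b] ab cd True by (simp add: insert_commute)
      next
        case cb: False
        show ?thesis
        proof (cases "d = b")
          case True
          then show ?thesis using C1g[OF sac(1), of b] ab cd by (simp add: insert_commute)
        next
          case db: False
          show ?thesis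
          proof (cases "{c,b} \<in> G \<and> {c,b} \<notin> H")
            case True
            then show ?thesis using C1g[OF sbd, of c] cd by simp
          next
            case F1: False
            show ?thesis
            proof (cases "{c,b} \<notin> G \<and> {c,b} \<in> H")
              case True
              then show ?thesis using C1g[OF sac(1), of b] ab by (simp add: insert_commute)
            next
              case F2: False
              show ?thesis
              proof (cases "{c,b} \<in> G")
                case False
                then have cbN: "{c,b} \<notin> G" "{c,b} \<notin> H" using F2 by auto
                obtain w where w: "w \<in> nb G c" "w \<notin> nb G a" "w \<noteq> a"
                  using excl[OF part G sac(1), of b] ab cbN cb unfolding nb_def by (auto simp: insert_commute)
                have w': "{c,w} \<in> G" "{a,w} \<notin> G" using w unfolding nb_def by auto
                have wc: "w \<noteq> c" using sg_edge[OF sgG w'(1)] by simp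
                have wb: "w \<noteq> b" using w'(1) cbN by auto
                have wd: "w \<noteq> d" using w'(1) cd by auto
                show ?thesis
                proof (cases "{c,w} \<notin> H \<and> {a,w} \<in> H")
                  case True
                  then show ?thesis using C1g[OF sac(2), of w] w' by (simp add: insert_commute)
                next
                  case F3: False
                  have L: "legal_switch k cls G a b c w"
                    unfolding legal_switch_def using i cd abn wc wb wd w ca da cb db w' ab cbN
                    by (auto simp: insert_commute)
                  let ?G1 = "switch_result G a b c w"
                  let ?T = "{{a,b},{c,w},{a,w},{c,b}}"
                  have G1: "?G1 \<in> Om3" using sw_Omega[OF part G L] .
                  have r1: "(G,?G1) \<in> rel3\<^sup>*" using sw_rel[OF part G L] by simp
                  have eq: "card (sd ?G1 H) + 2 * card (sd G H \<inter> ?T) = card (sd G H) + 4"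
                    using sw_sd[OF part G L fH] .
                  have mem: "{c,b} \<in> ?G1" "{c,d} \<notin> ?G1" "{a,w} \<in> ?G1" "{c,w} \<notin> ?G1"
                    using sw_mem[OF part G L, of "{c,b}"] sw_mem[OF part G L, of "{c,d}"]
                      sw_mem[OF part G L, of "{a,w}"] sw_mem[OF part G L, of "{c,w}"]
                      cbN cd w' ca da cb db wd cdn wc by (auto simp: doubleton_eq_iff)
                  have fin: "finite (sd G H \<inter> ?T)" by simp
                  have abT: "{a,b} \<in> sd G H \<inter> ?T" using ab by (simp add: sd_def)
                  show ?thesis
                  proof (cases "{c,w} \<notin> H \<or> {a,w} \<in> H")
                    case True
                    obtain z where z: "z \<in> sd G H \<inter> ?T" "z \<noteq> {a,b}"
                    proof (cases "{c,w} \<notin> H")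
                      case True
                      then have "{c,w} \<in> sd G H \<inter> ?T" using w' by (simp add: sd_def)
                      moreover have "{c,w} \<noteq> {a,b}" using ca cb by (auto simp: doubleton_eq_iff)
                      ultimately show ?thesis using that by blast
                    next
                      case False
                      then have "{a,w} \<in> H" using \<open>{c,w} \<notin> H \<or> {a,w} \<in> H\<close> by blast
                      then have "{a,w} \<in> sd G H \<inter> ?T" using w' by (simp add: sd_def)
                      moreover have "{a,w} \<noteq> {a,b}" using wb abn by (auto simp: doubleton_eq_iff)
                      ultimately show ?thesis using that by blast
                    qed
                    have "2 \<le> card (sd G H \<inter> ?T)" using two_le[OF abT z(1)] z(2) fin by metis
                    then have "card (sd ?G1 H) \<le> card (sd G H)" using eq by linarith
                    then show ?thesis using cont1[OF part G1 H r1 rtrancl.rtrancl_refl sbd, where v=c] mem cbN cd by simp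
                  next
                    case False
                    then have x: "{c,w} \<in> H" "{a,w} \<notin> H" by auto
                    have "1 \<le> card (sd G H \<inter> ?T)" using one_le[OF abT fin] .
                    then have "card (sd ?G1 H) \<le> card (sd G H) + 2" using eq by linarith
                    then show ?thesis
                      using cont2[OF part G1 H r1 rtrancl.rtrancl_refl sbd _ _ _ _ sac(1), where v=c and v'=w] mem cbN cd x wb wd ab
                        ca da cb db abn cdn
                      by (auto simp: insert_commute)
                  qed
                qed
              next
                case True
                then have cbK: "{c,b} \<in> G" "{c,b} \<in> H" using F1 by auto
                obtain w where w: "w \<in> nb H a" "w \<notin> nb H c" "w \<noteq> c"
                  using excl[OF part H sac(2), of b] ab cbK abn unfolding nb_def by (auto simp: insert_commute)
                have w': "{a,w} \<in> H" "{c,w} \<notin> H" using w unfolding nb_def by auto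
                have wa: "w \<noteq> a" using sg_edge[OF sgH w'(1)] by simp
                have wb: "w \<noteq> b" using w'(1) ab by auto
                have wd: "w \<noteq> d" using w'(2) cd by auto
                show ?thesis
                proof (cases "{a,w} \<notin> G \<and> {c,w} \<in> G")
                  case True
                  then show ?thesis using C1g[OF sac(2), of w] w' by (simp add: insert_commute)
                next
                  case F3: False
                  have L: "legal_switch k cls H c b a w"
                    unfolding legal_switch_def using i cd abn wa wb wd w ca da cb db w' ab cbK
                    by (auto simp: insert_commute)
                  let ?H1 = "switch_result H c b a w"
                  let ?T = "{{c,b},{a,w},{c,w},{a,b}}"
                  have H1: "?H1 \<in> Om3" using sw_Omega[OF part H L] .
                  have r1: "(H,?H1) \<in> rel3\<^sup>*" using sw_rel[OF part H L] by simp
                  have sdc: "sd ?H1 G = sd G ?H1" "sd H G = sd G H" unfolding sd_def by auto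
                  have eq: "card (sd G ?H1) + 2 * card (sd G H \<inter> ?T) = card (sd G H) + 4"
                    using sw_sd[OF part H L fG] unfolding sdc .
                  have mem: "{c,b} \<notin> ?H1" "{c,d} \<in> ?H1" "{a,w} \<notin> ?H1" "{c,w} \<in> ?H1"
                    using sw_mem[OF part H L, of "{c,b}"] sw_mem[OF part H L, of "{c,d}"]
                      sw_mem[OF part H L, of "{a,w}"] sw_mem[OF part H L, of "{c,w}"]
                      cbK cd w' ca da cb db wd cdn wa by (auto simp: doubleton_eq_iff)
                  have fin: "finite (sd G H \<inter> ?T)" by simp
                  have abT: "{a,b} \<in> sd G H \<inter> ?T" using ab by (simp add: sd_def)
                  have rG: "(G,G) \<in> rel3\<^sup>*" by simp
                  show ?thesis
                  proof (cases "{a,w} \<notin> G \<or> {c,w} \<in> G")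
                    case True
                    obtain z where z: "z \<in> sd G H \<inter> ?T" "z \<noteq> {a,b}"
                    proof (cases "{a,w} \<notin> G")
                      case True
                      then have "{a,w} \<in> sd G H \<inter> ?T" using w' by (simp add: sd_def)
                      moreover have "{a,w} \<noteq> {a,b}" using wb abn by (auto simp: doubleton_eq_iff)
                      ultimately show ?thesis using that by blast
                    next
                      case False
                      then have "{c,w} \<in> G" using \<open>{a,w} \<notin> G \<or> {c,w} \<in> G\<close> by blast
                      then have "{c,w} \<in> sd G H \<inter> ?T" using w' by (simp add: sd_def)
                      moreover have "{c,w} \<noteq> {a,b}" using ca cb by (auto simp: doubleton_eq_iff)
                      ultimately show ?thesis using that by blast
                    qed
                    have "2 \<le> card (sd G H \<inter> ?T)" using two_le[OF abT z(1)] z(2) fin by metis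
                    then have "card (sd G ?H1) \<le> card (sd G H)" using eq by linarith
                    then show ?thesis using cont1[OF part G H1 rG r1 sbd, where v=c] mem cbK cd by simp
                  next
                    case False
                    then have x: "{a,w} \<in> G" "{c,w} \<notin> G" by auto
                    have "1 \<le> card (sd G H \<inter> ?T)" using one_le[OF abT fin] .
                    then have "card (sd G ?H1) \<le> card (sd G H) + 2" using eq by linarith
                    then show ?thesis
                      using cont2[OF part G H1 rG r1 sbd _ _ _ _ sac(1), where v=c and v'=w] mem cbK cd x wb wd ab
                        ca da cb db abn cdn
                      by (auto simp: insert_commute)
                  qed
                qed
              qed
            qed
          qed
        qed
      qed
    qed
  qed
qed

lemma conn: "G \<in> Om3 \<Longrightarrow> H \<in> Om3 \<Longrightarrow> (G,H) \<in> rel3\<^sup>*"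
proof (induction "card (sd G H)" arbitrary: G H rule: less_induct)
  case less
  show ?case
  proof (cases "G = H")
    case True then show ?thesis by simp
  next
    case False
    have sdc: "sd H G = sd G H" unfolding sd_def by auto
    show ?thesis
    proof (cases "G - H = {}")
      case False
      then obtain e where e: "e \<in> G" "e \<notin> H" by auto
      then obtain a b where "e = {a,b}" using sg_form[OF Om_sg[OF part less.prems(1)]] by blast
      then have "goal n k cls d D G H" using mainL[OF less.prems] e by simp
      then obtain G' H' where g: "(G,G') \<in> rel3\<^sup>*" "(H,H') \<in> rel3\<^sup>*" "card (sd G' H') < card (sd G H)"
        unfolding goal_def[OF part] by blast
      have "G' \<in> Om3" "H' \<in> Om3" using rtr_Om[OF part] g less.prems by blast+
      then have "(G',H') \<in> rel3\<^sup>*" using less.hyps g(3) by blast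
      then show ?thesis using g(1) rtr_sym[OF part g(2)] by (meson rtrancl_trans)
    next
      case True
      then have "H - G \<noteq> {}" using \<open>G \<noteq> H\<close> by auto
      then obtain e where e: "e \<in> H" "e \<notin> G" by auto
      then obtain a b where "e = {a,b}" using sg_form[OF Om_sg[OF part less.prems(2)]] by blast
      then have "goal n k cls d D H G" using mainL[OF less.prems(2,1)] e by simp
      then obtain G' H' where g: "(H,H') \<in> rel3\<^sup>*" "(G,G') \<in> rel3\<^sup>*" "card (sd H' G') < card (sd H G)"
        unfolding goal_def[OF part] by blast
      have sdc2: "sd H' G' = sd G' H'" unfolding sd_def by auto
      have "G' \<in> Om3" "H' \<in> Om3" using rtr_Om[OF part] g less.prems by blast+
      then have "(G',H') \<in> rel3\<^sup>*" using less.hyps g(3) sdc sdc2 by auto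
      then show ?thesis using g(2) rtr_sym[OF part g(1)] by (meson rtrancl_trans)
    qed
  qed
qed

end


lemma sum_ind_const:
  assumes "finite S"
  shows "(\<Sum>H\<in>S. if H \<in> N then (c::real) else 0) = c * real (card (S \<inter> N))"
proof -
  have "(\<Sum>H\<in>S. if H \<in> N then c else 0) = (\<Sum>H\<in>S \<inter> N. c)"
    using assms by (simp add: sum.inter_restrict[symmetric] Int_def)
  also have "\<dots> = c * real (card (S \<inter> N))" by simp
  finally show ?thesis .
qed

context
  fixes n k :: nat and cls :: "nat \<Rightarrow> nat set" and d :: "nat \<Rightarrow> nat" and D :: "nat \<Rightarrow> nat \<Rightarrow> nat"
  assumes part: "is_partition n k cls"
begin

abbreviation "Om4 \<equiv> Omega n k cls d D"
abbreviation "rel4 \<equiv> switch_rel n k cls d D"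

lemma nbrs_sub: "G \<in> Om4 \<Longrightarrow> switch_nbrs k cls G \<subseteq> Om4"
  unfolding switch_nbrs_def using sw_Omega[OF part] by blast

lemma nbrs_fin: "G \<in> Om4 \<Longrightarrow> finite (switch_nbrs k cls G)"
  using nbrs_sub Om_finite[OF part] finite_subset by blast

lemma nbrs_ne: "G \<in> Om4 \<Longrightarrow> G' \<in> switch_nbrs k cls G \<Longrightarrow> G' \<noteq> G"
proof -
  assume G: "G \<in> Om4" and "G' \<in> switch_nbrs k cls G"
  then obtain u v u' v' where L: "legal_switch k cls G u v u' v'" and G': "G' = switch_result G u v u' v'"
    unfolding switch_nbrs_def by blast
  have "{u,v} \<in> G" using L unfolding legal_switch_def by blast
  moreover have "{u,v} \<notin> G'" using G' unfolding switch_result_def by simp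
  ultimately show ?thesis by blast
qed

lemma tp_nonneg:
  assumes G: "G \<in> Om4"
  shows "0 \<le> trans_prob n k cls d D G G'"
proof -
  let ?N = "switch_nbrs k cls G"
  let ?l = "real (num_switches k cls G)"
  define off where "off = (\<lambda>H. if H \<noteq> G \<and> H \<in> ?N
                      then (1/2) * (1 / ?l) * (?l / (?l + real (num_switches k cls H))) else (0::real))"
  have tp: "trans_prob n k cls d D G G' = (if G' = G then 1 - (\<Sum>H\<in>Om4 - {G}. off H) else off G')"
    unfolding trans_prob_def off_def Let_def by simp
  have off0: "0 \<le> off H" for H unfolding off_def by auto
  have offb: "off H \<le> (if H \<in> ?N then 1 / (2 * ?l) else 0)" for H
  proof (cases "H \<noteq> G \<and> H \<in> ?N")
    case True
    have "?l / (?l + real (num_switches k cls H)) \<le> 1"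
      by (cases "?l + real (num_switches k cls H) = 0") (auto simp: divide_le_eq_1)
    then have "(1/2) * (1 / ?l) * (?l / (?l + real (num_switches k cls H))) \<le> (1/2) * (1 / ?l) * 1"
      by (intro mult_left_mono) auto
    then show ?thesis using True unfolding off_def by simp
  next
    case False
    then show ?thesis unfolding off_def by auto
  qed
  have fin: "finite (Om4 - {G})" using Om_finite[OF part] by simp
  have "(\<Sum>H\<in>Om4 - {G}. off H) \<le> (\<Sum>H\<in>Om4 - {G}. if H \<in> ?N then 1 / (2 * ?l) else 0)"
    by (rule sum_mono) (use offb in auto)
  also have "\<dots> = 1 / (2 * ?l) * real (card ((Om4 - {G}) \<inter> ?N))"
    using sum_ind_const[OF fin] by simp
  also have "\<dots> \<le> 1 / (2 * ?l) * ?l"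
  proof (intro mult_left_mono)
    have "card ((Om4 - {G}) \<inter> ?N) \<le> card ?N" using nbrs_fin[OF G] by (intro card_mono) auto
    then show "real (card ((Om4 - {G}) \<inter> ?N)) \<le> ?l" unfolding num_switches_def by simp
  qed auto
  also have "\<dots> \<le> 1" by (cases "?l = 0") auto
  finally have "(\<Sum>H\<in>Om4 - {G}. off H) \<le> 1" .
  then show ?thesis using tp off0 by auto
qed

lemma tp_pos:
  assumes G: "G \<in> Om4" and G': "G' \<in> switch_nbrs k cls G"
  shows "0 < trans_prob n k cls d D G G'"
proof -
  have ne: "G' \<noteq> G" using nbrs_ne[OF G G'] .
  have "num_switches k cls G > 0"
    unfolding num_switches_def using nbrs_fin[OF G] G' by (auto simp: card_gt_0_iff)
  then show ?thesis unfolding trans_prob_def Let_def using ne G' by (simp add: add_pos_nonneg)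
qed

lemma tpn_nonneg: "0 \<le> trans_prob_n n k cls d D t G0 G'"
proof (induction t arbitrary: G')
  case 0 then show ?case by simp
next
  case (Suc t)
  show ?case by simp (intro sum_nonneg mult_nonneg_nonneg Suc.IH tp_nonneg)
qed

lemma path_pos: "(G0,G1) \<in> rel4\<^sup>* \<Longrightarrow> \<exists>t. 0 < trans_prob_n n k cls d D t G0 G1"
proof (induction rule: rtrancl_induct)
  case base
  have "trans_prob_n n k cls d D 0 G0 G0 = 1" by simp
  then show ?case by (metis zero_less_one)
next
  case (step y z)
  then obtain t where t: "0 < trans_prob_n n k cls d D t G0 y" by blast
  have y: "y \<in> Om4" and z: "z \<in> switch_nbrs k cls y" using step(2) unfolding switch_rel_def by auto
  have "0 < trans_prob_n n k cls d D t G0 y * trans_prob n k cls d D y z"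
    using t tp_pos[OF y z] by simp
  also have "\<dots> \<le> (\<Sum>H\<in>Om4. trans_prob_n n k cls d D t G0 H * trans_prob n k cls d D H z)"
    by (rule member_le_sum[OF y]) (auto intro!: mult_nonneg_nonneg tpn_nonneg tp_nonneg simp: Om_finite[OF part])
  also have "\<dots> = trans_prob_n n k cls d D (Suc t) G0 z" by simp
  finally show ?case by blast
qed

end

theorem lemma4:
  fixes n k :: nat and cls :: "nat \<Rightarrow> nat set" and d :: "nat \<Rightarrow> nat" and D :: "nat \<Rightarrow> nat \<Rightarrow> nat"
  assumes "is_partition n k cls"
  shows "irreducible_chain n k cls d D \<and>
         (\<forall>G0\<in>Omega n k cls d D. \<forall>G1\<in>Omega n k cls d D. (G0, G1) \<in> (switch_rel n k cls d D)\<^sup>*)"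
proof -
  have c: "\<forall>G0\<in>Omega n k cls d D. \<forall>G1\<in>Omega n k cls d D. (G0, G1) \<in> (switch_rel n k cls d D)\<^sup>*"
    using conn[OF assms] by blast
  then have "irreducible_chain n k cls d D"
    unfolding irreducible_chain_def using path_pos[OF assms] by blast
  then show ?thesis using c by blast
qed


end
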